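(* Let $W$ be a layered wheel with rooted tree $T$, let $n\ge8$ be an integer and let $G$ be an $n$-vertex induced subgraph of $W$. Then either (i) there is some $u\in V(T)$ with at least $\frac n{16}$ and at most $\frac n4$ descendants in $V(G)$, such that every node $v\in V(T)$ in the same layer as $u$ has at most $\frac n4$ descendants in $V(G)$; or (ii) there is some $u\in V(T)$ and a child $u^+$ of $u$ such that the total number of descendants in $V(G)$ of all children of $u$ that lie strictly to the right of the leftmost child of $u$ and strictly to the left of $u^+$ is at least $\frac n{16}$ and at most $\frac n8$.
   Context: A layered wheel is a countably infinite graph $W$ on the same vertex set as a countably infinite, locally finite rooted tree $T$ embedded in the plane, such that: (1) for every natural number $n$, the set $L_n$ (layer) of nodes at distance $n$ from the root induces in $W$ a finite path visiting $L_n$ in the left-to-right order of the embedding (this order also orders the children of each node from left to right); edges inside layers form the set $E_L$; (2) every edge not in $E_L$ joins two nodes in ancestor–descendant relation in $T$; (3) there is a finite bound on the length of paths in $T$ consisting only of degree-$2$ nodes of $T$. A node is its own ancestor and descendant. *)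

theory Defs
  imports Complex_Main "HOL-Library.Countable_Set"
begin

text \<open>A rooted tree T on vertex set V with root r is given by a parent map par:
  every vertex reaches r by iterating par.\<close>

definition depth :: "('a \<Rightarrow> 'a) \<Rightarrow> 'a \<Rightarrow> 'a \<Rightarrow> nat" where
  "depth par r v = (LEAST k. (par ^^ k) v = r)"

definition layer :: "'a set \<Rightarrow> ('a \<Rightarrow> 'a) \<Rightarrow> 'a \<Rightarrow> nat \<Rightarrow> 'a set" where
  "layer V par r n = {v \<in> V. depth par r v = n}"

text \<open>u is an ancestor of v (every node is its own ancestor).\<close>
definition ancestor :: "('a \<Rightarrow> 'a) \<Rightarrow> 'a \<Rightarrow> 'a \<Rightarrow> 'a \<Rightarrow> bool" where
  "ancestor par r u v = (\<exists>k \<le> depth par r v. (par ^^ k) v = u)"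

definition children :: "'a set \<Rightarrow> ('a \<Rightarrow> 'a) \<Rightarrow> 'a \<Rightarrow> 'a \<Rightarrow> 'a set" where
  "children V par r u = {c \<in> V. c \<noteq> r \<and> par c = u}"

definition tadj :: "'a set \<Rightarrow> ('a \<Rightarrow> 'a) \<Rightarrow> 'a \<Rightarrow> 'a \<Rightarrow> 'a \<Rightarrow> bool" where
  "tadj V par r u v = (u \<in> V \<and> v \<in> V \<and> ((u \<noteq> r \<and> par u = v) \<or> (v \<noteq> r \<and> par v = u)))"

definition tdegree :: "'a set \<Rightarrow> ('a \<Rightarrow> 'a) \<Rightarrow> 'a \<Rightarrow> 'a \<Rightarrow> nat" where
  "tdegree V par r v = card {w. tadj V par r v w}"

definition tpath :: "'a set \<Rightarrow> ('a \<Rightarrow> 'a) \<Rightarrow> 'a \<Rightarrow> 'a list \<Rightarrow> bool" where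
  "tpath V par r p = (p \<noteq> [] \<and> distinct p \<and> set p \<subseteq> V \<and>
      (\<forall>i. Suc i < length p \<longrightarrow> tadj V par r (p ! i) (p ! Suc i)))"

text \<open>Countably infinite, locally finite rooted tree, embedded in the plane:
  the embedding is recorded by a strict left-to-right order lt which is a strict
  linear order on each layer and is compatible with the parent map (if the
  parent of x is left of the parent of y then x is left of y); restricted to the
  children of a node it is the left-to-right order of the children.\<close>
definition plane_rooted_tree ::
  "'a set \<Rightarrow> 'a \<Rightarrow> ('a \<Rightarrow> 'a) \<Rightarrow> ('a \<Rightarrow> 'a \<Rightarrow> bool) \<Rightarrow> bool" where
  "plane_rooted_tree V r par lt =
    (r \<in> V \<and> infinite V \<and> countable V \<and>
     (\<forall>v \<in> V. v \<noteq> r \<longrightarrow> par v \<in> V) \<and>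
     (\<forall>v \<in> V. \<exists>k. (par ^^ k) v = r) \<and>
     (\<forall>v \<in> V. finite (children V par r v)) \<and>
     (\<forall>n. \<forall>x \<in> layer V par r n. \<not> lt x x) \<and>
     (\<forall>n. \<forall>x \<in> layer V par r n. \<forall>y \<in> layer V par r n. \<forall>z \<in> layer V par r n.
          lt x y \<longrightarrow> lt y z \<longrightarrow> lt x z) \<and>
     (\<forall>n. \<forall>x \<in> layer V par r n. \<forall>y \<in> layer V par r n. x \<noteq> y \<longrightarrow> lt x y \<or> lt y x) \<and>
     (\<forall>n. \<forall>x \<in> layer V par r (Suc n). \<forall>y \<in> layer V par r (Suc n).
          lt (par x) (par y) \<longrightarrow> lt x y))"

definition layered_wheel ::
  "'a set \<Rightarrow> 'a \<Rightarrow> ('a \<Rightarrow> 'a) \<Rightarrow> ('a \<Rightarrow> 'a \<Rightarrow> bool) \<Rightarrow> ('a \<Rightarrow> 'a \<Rightarrow> bool) \<Rightarrow> bool" where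
  "layered_wheel V r par lt E =
    (plane_rooted_tree V r par lt \<and>
     (\<forall>u v. E u v \<longrightarrow> u \<in> V \<and> v \<in> V \<and> u \<noteq> v \<and> E v u) \<and>
     \<comment> \<open>(1) each layer induces in W the path visiting it in left-to-right order\<close>
     (\<forall>n. \<forall>u \<in> layer V par r n. \<forall>v \<in> layer V par r n.
          E u v \<longleftrightarrow>
            ((lt u v \<and> \<not> (\<exists>w \<in> layer V par r n. lt u w \<and> lt w v)) \<or>
             (lt v u \<and> \<not> (\<exists>w \<in> layer V par r n. lt v w \<and> lt w u)))) \<and>
     \<comment> \<open>(2) edges between different layers join ancestor and descendant\<close>
     (\<forall>u v. E u v \<longrightarrow> depth par r u \<noteq> depth par r v \<longrightarrow>
          ancestor par r u v \<or> ancestor par r v u) \<and>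
     \<comment> \<open>(3) bounded length of T-paths of degree-2 nodes of T\<close>
     (\<exists>B::nat. \<forall>p. tpath V par r p \<and> (\<forall>x \<in> set p. tdegree V par r x = 2)
          \<longrightarrow> length p \<le> B))"

definition ndesc :: "('a \<Rightarrow> 'a) \<Rightarrow> 'a \<Rightarrow> 'a set \<Rightarrow> 'a \<Rightarrow> nat" where
  "ndesc par r S u = card {x \<in> S. ancestor par r u x}"

end

theory Submission
  imports Defs
begin

lemma fin_max:
  assumes "finite X" "X \<noteq> {}" "X \<subseteq> L"
    and tr: "\<forall>x\<in>L. \<forall>y\<in>L. \<forall>z\<in>L. lt x y \<longrightarrow> lt y z \<longrightarrow> lt x z"
    and li: "\<forall>x\<in>L. \<forall>y\<in>L. x \<noteq> y \<longrightarrow> lt x y \<or> lt y x"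
  shows "\<exists>m\<in>X. \<forall>x\<in>X. x \<noteq> m \<longrightarrow> lt x m"
  using assms(1,2,3)
proof (induction X rule: finite_ne_induct)
  case (singleton x) thus ?case by auto
next
  case (insert a F)
  then obtain m where m: "m \<in> F" "\<forall>x\<in>F. x \<noteq> m \<longrightarrow> lt x m" by auto
  have aL: "a \<in> L" and mL: "m \<in> L" using insert m by auto
  show ?case
  proof (cases "lt a m")
    case True thus ?thesis using m insert by auto
  next
    case False
    have "a \<noteq> m" using insert m(1) by blast
    hence am: "lt m a" using li[rule_format, OF aL mL] False by blast
    have "\<forall>x\<in>insert a F. x \<noteq> a \<longrightarrow> lt x a"
    proof (intro ballI impI)
      fix x assume "x \<in> insert a F" "x \<noteq> a"
      hence xF: "x \<in> F" by auto
      hence xL: "x \<in> L" using insert by auto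
      show "lt x a"
      proof (cases "x = m")
        case True thus ?thesis using am by simp
      next
        case False
        hence "lt x m" using m(2) xF by blast
        thus ?thesis using tr[rule_format, OF xL mL aL] am by blast
      qed
    qed
    thus ?thesis by blast
  qed
qed

lemma fin_min:
  assumes "finite X" "X \<noteq> {}" "X \<subseteq> L"
    and tr: "\<forall>x\<in>L. \<forall>y\<in>L. \<forall>z\<in>L. lt x y \<longrightarrow> lt y z \<longrightarrow> lt x z"
    and li: "\<forall>x\<in>L. \<forall>y\<in>L. x \<noteq> y \<longrightarrow> lt x y \<or> lt y x"
  shows "\<exists>m\<in>X. \<forall>x\<in>X. x \<noteq> m \<longrightarrow> lt m x"
proof -
  have "\<exists>m\<in>X. \<forall>x\<in>X. x \<noteq> m \<longrightarrow> (\<lambda>a b. lt b a) x m"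
  proof (rule fin_max[OF assms(1,2,3)])
    show "\<forall>x\<in>L. \<forall>y\<in>L. \<forall>z\<in>L. lt y x \<longrightarrow> lt z y \<longrightarrow> lt z x"
    proof (intro ballI impI)
      fix x y z assume "x \<in> L" "y \<in> L" "z \<in> L" "lt y x" "lt z y"
      thus "lt z x" using tr[rule_format, of z y x] by blast
    qed
    show "\<forall>x\<in>L. \<forall>y\<in>L. x \<noteq> y \<longrightarrow> lt y x \<or> lt x y"
      using li by blast
  qed
  thus ?thesis by simp
qed

context
  fixes V :: "'a set" and r :: 'a and par :: "'a \<Rightarrow> 'a"
  assumes rV: "r \<in> V" and parV: "\<forall>v\<in>V. v \<noteq> r \<longrightarrow> par v \<in> V"
    and reach: "\<forall>v\<in>V. \<exists>k. (par^^k) v = r"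
begin

lemma depth_spec: assumes "v \<in> V" shows "(par^^depth par r v) v = r"
proof -
  obtain k where "(par^^k) v = r" using reach assms by blast
  thus ?thesis unfolding depth_def by (rule LeastI)
qed

lemma depth_le: "(par^^k) v = r \<Longrightarrow> depth par r v \<le> k"
  unfolding depth_def by (rule Least_le)

lemma depth_r: "depth par r r = 0"
  using depth_le[of 0 r] by simp

lemma depth_par:
  assumes "v \<in> V" "v \<noteq> r"
  shows "par v \<in> V" "depth par r v = Suc (depth par r (par v))"
proof -
  show pv: "par v \<in> V" using assms parV by blast
  have a: "(par^^depth par r (par v)) (par v) = r" using pv by (rule depth_spec)
  have "(par^^Suc (depth par r (par v))) v = r" using a
    by (simp only: funpow_Suc_right comp_def)
  hence le1: "depth par r v \<le> Suc (depth par r (par v))" by (rule depth_le)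
  have b: "(par^^depth par r v) v = r" using assms(1) by (rule depth_spec)
  have "depth par r v \<noteq> 0" using b assms(2) by (metis funpow_0)
  then obtain d where d: "depth par r v = Suc d" by (cases "depth par r v") auto
  have "(par^^d) (par v) = r" using b d by (simp only: funpow_Suc_right comp_def)
  hence "depth par r (par v) \<le> d" by (rule depth_le)
  thus "depth par r v = Suc (depth par r (par v))" using le1 d by simp
qed

lemma iter:
  "v \<in> V \<Longrightarrow> k \<le> depth par r v \<Longrightarrow>
     (par^^k) v \<in> V \<and> depth par r ((par^^k) v) = depth par r v - k"
proof (induction k)
  case 0 thus ?case by simp
next
  case (Suc k)
  hence IH: "(par^^k) v \<in> V" "depth par r ((par^^k) v) = depth par r v - k" by auto
  have ne: "(par^^k) v \<noteq> r" using IH(2) Suc.prems(2) depth_r by auto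
  show ?case using depth_par[OF IH(1) ne] IH(2) by simp
qed

lemma anc_props:
  assumes "x \<in> V" "ancestor par r u x"
  shows "u \<in> V" "depth par r u \<le> depth par r x"
proof -
  obtain k where k: "k \<le> depth par r x" "(par^^k) x = u"
    using assms(2) unfolding ancestor_def by blast
  show "u \<in> V" "depth par r u \<le> depth par r x" using iter[OF assms(1) k(1)] k(2) by auto
qed

lemma anc_cover:
  assumes "x \<in> V" "ancestor par r u x" "x \<noteq> u"
  shows "\<exists>c\<in>children V par r u. ancestor par r c x"
proof -
  obtain k where k: "k \<le> depth par r x" "(par^^k) x = u"
    using assms(2) unfolding ancestor_def by blast
  with assms(3) obtain j where j: "k = Suc j" by (cases k) auto
  let ?c = "(par^^j) x"
  have c: "?c \<in> V" "depth par r ?c = depth par r x - j" using iter[OF assms(1)] k j by auto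
  have "?c \<noteq> r" using c(2) k j depth_r by auto
  moreover have "par ?c = u" using k(2) j by simp
  ultimately have "?c \<in> children V par r u" using c(1) unfolding children_def by blast
  moreover have "ancestor par r ?c x" unfolding ancestor_def by (rule exI[of _ j]) (use k j in auto)
  ultimately show ?thesis by blast
qed

lemma root_anc: assumes "x \<in> V" shows "ancestor par r r x"
  unfolding ancestor_def by (rule exI[of _ "depth par r x"]) (simp add: depth_spec[OF assms])

lemma child_depth:
  assumes "c \<in> children V par r u"
  shows "c \<in> V \<and> depth par r c = Suc (depth par r u)"
proof -
  have c: "c \<in> V" "c \<noteq> r" "par c = u" using assms unfolding children_def by auto
  show ?thesis using depth_par[OF c(1,2)] c by simp
qed

end

theorem lemma5p1:
  fixes V :: "'a set" and r :: 'a and par :: "'a \<Rightarrow> 'a"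
    and lt :: "'a \<Rightarrow> 'a \<Rightarrow> bool" and E :: "'a \<Rightarrow> 'a \<Rightarrow> bool"
    and S :: "'a set" and n :: nat
  assumes "layered_wheel V r par lt E"
    and "n \<ge> 8"
    and "S \<subseteq> V" and "finite S" and "card S = n"
  shows "(\<exists>u \<in> V. real n / 16 \<le> real (ndesc par r S u) \<and> real (ndesc par r S u) \<le> real n / 4 \<and>
            (\<forall>v \<in> V. depth par r v = depth par r u \<longrightarrow> real (ndesc par r S v) \<le> real n / 4))
       \<or> (\<exists>u \<in> V. \<exists>c0 \<in> children V par r u. \<exists>up \<in> children V par r u.
            (\<forall>c \<in> children V par r u. c \<noteq> c0 \<longrightarrow> lt c0 c) \<and>
            real n / 16 \<le> real (\<Sum>c \<in> {c \<in> children V par r u. lt c0 c \<and> lt c up}. ndesc par r S c) \<and>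
            real (\<Sum>c \<in> {c \<in> children V par r u. lt c0 c \<and> lt c up}. ndesc par r S c) \<le> real n / 8)"
proof -
  have PT: "plane_rooted_tree V r par lt" using assms(1) unfolding layered_wheel_def by blast
  have rV: "r \<in> V" and parV: "\<forall>v\<in>V. v \<noteq> r \<longrightarrow> par v \<in> V"
    and reach: "\<forall>v\<in>V. \<exists>k. (par^^k) v = r"
    and finch: "\<forall>v\<in>V. finite (children V par r v)"
    and irr: "\<forall>m. \<forall>x\<in>layer V par r m. \<not> lt x x"
    and trn: "\<forall>m. \<forall>x \<in> layer V par r m. \<forall>y \<in> layer V par r m. \<forall>z \<in> layer V par r m.
          lt x y \<longrightarrow> lt y z \<longrightarrow> lt x z"
    and lin: "\<forall>m. \<forall>x \<in> layer V par r m. \<forall>y \<in> layer V par r m. x \<noteq> y \<longrightarrow> lt x y \<or> lt y x"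
    using PT unfolding plane_rooted_tree_def by blast+
  note L = rV parV reach
  define f where "f = ndesc par r S"
  have SV: "S \<subseteq> V" by fact
  have dec: "f u \<le> 1 + (\<Sum>c\<in>children V par r u. f c)" if uV: "u \<in> V" for u
  proof -
    have sub: "{x\<in>S. ancestor par r u x} \<subseteq>
        {u} \<union> (\<Union>c\<in>children V par r u. {x\<in>S. ancestor par r c x})"
      using anc_cover[OF L] SV by blast
    have fin: "finite ({u} \<union> (\<Union>c\<in>children V par r u. {x\<in>S. ancestor par r c x}))"
      using finch uV assms(4) by auto
    have "card {x\<in>S. ancestor par r u x} \<le>
        card ({u} \<union> (\<Union>c\<in>children V par r u. {x\<in>S. ancestor par r c x}))"
      by (rule card_mono[OF fin sub])
    also have "\<dots> \<le> card {u} + card (\<Union>c\<in>children V par r u. {x\<in>S. ancestor par r c x})"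
      by (rule card_Un_le)
    also have "\<dots> \<le> 1 + (\<Sum>c\<in>children V par r u. card {x\<in>S. ancestor par r c x})"
      using card_UN_le[OF finch[rule_format, OF uV]] by simp
    finally show ?thesis unfolding f_def ndesc_def by simp
  qed
  have fr: "f r = n"
  proof -
    have "{x\<in>S. ancestor par r r x} = S" using root_anc[OF L] SV by blast
    thus ?thesis unfolding f_def ndesc_def using assms(5) by simp
  qed
  have Sne: "S \<noteq> {}" using assms(2,5) by auto
  define D where "D = Max (depth par r ` S)"
  have bound: "depth par r v \<le> D" if "v \<in> V" "0 < f v" for v
  proof -
    have "{x\<in>S. ancestor par r v x} \<noteq> {}" using that(2) unfolding f_def ndesc_def
      by (metis card.empty less_irrefl)
    then obtain x where x: "x \<in> S" "ancestor par r v x" by blast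
    have "depth par r v \<le> depth par r x" using anc_props[OF L] x SV by blast
    also have "\<dots> \<le> D" unfolding D_def using x(1) assms(4) by simp
    finally show ?thesis .
  qed
  define K where "K = {d. \<exists>v\<in>V. depth par r v = d \<and> real n / 4 < real (f v)}"
  have K0: "0 \<in> K" unfolding K_def using rV depth_r[OF L] fr assms(2) by force
  have KD: "K \<subseteq> {..D}"
  proof
    fix d assume "d \<in> K"
    then obtain v where "v \<in> V" "depth par r v = d" "real n / 4 < real (f v)" unfolding K_def by blast
    thus "d \<in> {..D}" using bound[of v] by (simp; smt (verit) of_nat_0_le_iff of_nat_less_iff of_nat_0 divide_nonneg_pos)
  qed
  have finK: "finite K" using KD finite_subset by blast
  define k where "k = Max K"
  have "k \<in> K" unfolding k_def using finK K0 by (metis Max_in empty_iff)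
  then obtain u where u: "u \<in> V" "depth par r u = k" "real n / 4 < real (f u)"
    unfolding K_def by blast
  have above: "real (f v) \<le> real n / 4" if "v \<in> V" "depth par r v = Suc k" for v
  proof (rule ccontr)
    assume "\<not> ?thesis"
    hence "Suc k \<in> K" unfolding K_def using that by force
    hence "Suc k \<le> k" unfolding k_def using finK by simp
    thus False by simp
  qed
  define C where "C = children V par r u"
  have Cp: "c \<in> V \<and> depth par r c = Suc k" if "c \<in> C" for c
    using child_depth[OF L] that u(2) unfolding C_def by auto
  have finC: "finite C" unfolding C_def using finch u(1) by blast
  define Ly where "Ly = layer V par r (Suc k)"
  have CL: "C \<subseteq> Ly" unfolding Ly_def layer_def using Cp by blast
  have irrL: "\<forall>x\<in>Ly. \<not> lt x x" using irr unfolding Ly_def by blast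
  have trL: "\<forall>x\<in>Ly. \<forall>y\<in>Ly. \<forall>z\<in>Ly. lt x y \<longrightarrow> lt y z \<longrightarrow> lt x z" using trn unfolding Ly_def by blast
  have liL: "\<forall>x\<in>Ly. \<forall>y\<in>Ly. x \<noteq> y \<longrightarrow> lt x y \<or> lt y x" using lin unfolding Ly_def by blast
  show ?thesis
  proof (cases "\<exists>c\<in>C. real n / 16 \<le> real (f c)")
    case True
    then obtain c where c: "c \<in> C" "real n / 16 \<le> real (f c)" by blast
    have "real (f c) \<le> real n / 4" using above Cp c(1) by blast
    moreover have "\<forall>v\<in>V. depth par r v = depth par r c \<longrightarrow> real (f v) \<le> real n / 4"
      using above Cp c(1) by metis
    ultimately show ?thesis apply (intro disjI1)
      using c Cp unfolding f_def by blast
  next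
    case False
    hence small: "\<forall>c\<in>C. real (f c) < real n / 16" by auto
    have sumC: "real n / 4 - 1 < (\<Sum>c\<in>C. real (f c))"
    proof -
      have "real (f u) \<le> 1 + real (\<Sum>c\<in>C. f c)" using dec[OF u(1)] unfolding C_def by linarith
      thus ?thesis using u(3) by simp
    qed
    have n16: "n \<ge> 16"
    proof (rule ccontr)
      assume "\<not> n \<ge> 16"
      hence "\<forall>c\<in>C. f c = 0" using small by auto
      hence "(\<Sum>c\<in>C. real (f c)) = 0" by simp
      thus False using sumC assms(2) by simp
    qed
    have Cne: "C \<noteq> {}" using sumC n16 by auto
    obtain c0 where c0: "c0 \<in> C" "\<forall>x\<in>C. x \<noteq> c0 \<longrightarrow> lt c0 x"
      using fin_min[OF finC Cne CL trL liL] by blast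
    obtain cm where cm: "cm \<in> C" "\<forall>x\<in>C. x \<noteq> cm \<longrightarrow> lt x cm"
      using fin_max[OF finC Cne CL trL liL] by blast
    define P where "P w = (\<Sum>c\<in>{c\<in>C. lt c0 c \<and> lt c w}. real (f c))" for w
    have ne0m: "c0 \<noteq> cm"
    proof
      assume eq: "c0 = cm"
      have "C = {c0}"
      proof (rule ccontr)
        assume "C \<noteq> {c0}"
        then obtain x where x: "x \<in> C" "x \<noteq> c0" using c0(1) by blast
        hence "lt c0 x" "lt x c0" using c0 cm eq by auto
        thus False using trL irrL CL x(1) c0(1) by blast
      qed
      hence "(\<Sum>c\<in>C. real (f c)) = real (f c0)" by simp
      thus False using sumC small c0(1) n16 by force
    qed
    have seteq: "{c\<in>C. lt c0 c \<and> lt c cm} = C - {c0} - {cm}"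
      using c0 cm irrL CL ne0m by blast
    have "(\<Sum>c\<in>C. real (f c)) = real (f c0) + (\<Sum>c\<in>C - {c0}. real (f c))"
      using sum.remove[OF finC c0(1)] by simp
    also have "(\<Sum>c\<in>C - {c0}. real (f c)) = real (f cm) + (\<Sum>c\<in>C - {c0} - {cm}. real (f c))"
      using sum.remove[of "C - {c0}" cm] finC cm(1) ne0m by simp
    finally have "P cm = (\<Sum>c\<in>C. real (f c)) - real (f c0) - real (f cm)"
      unfolding P_def seteq by simp
    moreover have "real (f c0) < real n / 16" "real (f cm) < real n / 16"
      using small c0(1) cm(1) by auto
    moreover have "real n \<ge> 16" using n16 by simp
    ultimately have Pcm: "real n / 16 \<le> P cm" using sumC by linarith
    define A where "A = {w\<in>C. real n / 16 \<le> P w}"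
    have Ane: "A \<noteq> {}" using Pcm cm(1) unfolding A_def by blast
    have finA: "finite A" using finC unfolding A_def by simp
    have AL: "A \<subseteq> Ly" using CL unfolding A_def by blast
    obtain w where w: "w \<in> A" "\<forall>x\<in>A. x \<noteq> w \<longrightarrow> lt w x"
      using fin_min[OF finA Ane AL trL liL] by blast
    have wC: "w \<in> C" and Pw: "real n / 16 \<le> P w" using w(1) unfolding A_def by auto
    define B where "B = {c\<in>C. lt c0 c \<and> lt c w}"
    have finB: "finite B" using finC unfolding B_def by simp
    have BL: "B \<subseteq> Ly" using CL unfolding B_def by blast
    have Bne: "B \<noteq> {}"
    proof
      assume "B = {}"
      hence "P w = 0" unfolding P_def B_def[symmetric] by simp
      thus False using Pw n16 by simp
    qed
    obtain p where p: "p \<in> B" "\<forall>x\<in>B. x \<noteq> p \<longrightarrow> lt x p"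
      using fin_max[OF finB Bne BL trL liL] by blast
    have pC: "p \<in> C" "lt c0 p" "lt p w" using p(1) unfolding B_def by auto
    have Bp: "{c\<in>C. lt c0 c \<and> lt c p} = B - {p}"
    proof
      show "{c\<in>C. lt c0 c \<and> lt c p} \<subseteq> B - {p}"
      proof
        fix c assume c: "c \<in> {c\<in>C. lt c0 c \<and> lt c p}"
        hence "lt c w" using trL CL pC wC by blast
        moreover have "c \<noteq> p" using c irrL CL by blast
        ultimately show "c \<in> B - {p}" using c unfolding B_def by blast
      qed
      show "B - {p} \<subseteq> {c\<in>C. lt c0 c \<and> lt c p}" using p unfolding B_def by blast
    qed
    have "P w = P p + real (f p)"
      unfolding P_def B_def[symmetric] Bp using sum.remove[OF finB p(1), of "\<lambda>c. real (f c)"] by simp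
    moreover have "p \<notin> A"
    proof
      assume "p \<in> A"
      moreover have "p \<noteq> w" using pC(3) irrL CL wC by blast
      ultimately have "lt w p" using w by blast
      thus False using pC(3) trL irrL CL wC pC(1) by blast
    qed
    hence "P p < real n / 16" using pC(1) unfolding A_def by auto
    ultimately have "P w < real n / 8" using small pC(1) by force
    show ?thesis
      apply (intro disjI2)
      apply (rule bexI[OF _ u(1)])
      apply (rule bexI[of _ c0])
       apply (rule bexI[of _ w])
      using c0 wC Pw \<open>P w < real n / 8\<close> unfolding P_def C_def f_def by auto
  qed
qed

end
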